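(* Let $G$ be a finite simple undirected graph and let $F$ be a rooted forest on vertex set $V(G)$, given by parent pointers, all of whose edges are edges of $G$. Let $u$ be the root of one tree of $F$. Run the following procedure. Initialize a set $S=\{u\}$ and a FIFO queue $Q$ containing only $u$. While $Q$ is nonempty: pop a vertex $x$ from $Q$, and for each neighbor $y$ of $x$ in $G$: if $y=\mathrm{parent}(x)$, skip $y$; else if $\mathrm{parent}(y)=x$, push $y$ onto $Q$ and add $y$ to $S$; otherwise set $\mathit{succ}=\mathrm{true}$ and scan the vertices $w=y,\ \mathrm{parent}(y),\ \mathrm{parent}(\mathrm{parent}(y)),\dots$ up to and including the root of the tree of $F$ containing $y$, where for each scanned $w$: if $w\in S$, set $\mathit{succ}=\mathrm{false}$ and stop the scan, else add $w$ to $S$; if after the scan $\mathit{succ}=\mathrm{true}$, the whole procedure stops and reports success (the edge $(x,y)$ being a replacement edge). If the queue becomes empty without success being reported, the procedure terminates reporting failure. Then, if the procedure terminates reporting failure, $S$ is exactly the set of vertices of the tree of $F$ rooted at $u$.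
   Context: In the paper this procedure is the search for a replacement edge after a tree edge has been deleted from a spanning forest maintained by parent pointers; $u$ is the root of the subtree in which the search is performed. *)

theory Defs
  imports Main
begin

text \<open>Parent-pointer forest: par v = Some p means p is the parent of v; par v = None means v is a root.
  The parent relation (child, parent):\<close>
definition parent_rel :: "('a \<Rightarrow> 'a option) \<Rightarrow> ('a \<times> 'a) set" where
  "parent_rel par = {(v, p). par v = Some p}"

definition tree_of :: "('a \<Rightarrow> 'a option) \<Rightarrow> 'a \<Rightarrow> 'a set" where
  "tree_of par u = {v. (v, u) \<in> (parent_rel par)\<^sup>*}"

text \<open>The ancestor scan: scan par S w S' succ means scanning w, parent w, ... up to the root,
  starting with set S, ends with set S' and flag succ.\<close>
inductive scan :: "('a \<Rightarrow> 'a option) \<Rightarrow> 'a set \<Rightarrow> 'a \<Rightarrow> 'a set \<Rightarrow> bool \<Rightarrow> bool"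
  for par where
  scan_hit: "w \<in> S \<Longrightarrow> scan par S w S False"
| scan_root: "w \<notin> S \<Longrightarrow> par w = None \<Longrightarrow> scan par S w (insert w S) True"
| scan_up: "w \<notin> S \<Longrightarrow> par w = Some p \<Longrightarrow> scan par (insert w S) p S' b \<Longrightarrow> scan par S w S' b"

text \<open>Processing the neighbour list ys of the popped vertex x with current set S and queue Q.
  Result None = success reported; Some (S', Q') = all neighbours processed without success.\<close>
inductive process_nbrs :: "('a \<Rightarrow> 'a option) \<Rightarrow> 'a \<Rightarrow> 'a list \<Rightarrow> 'a set \<Rightarrow> 'a list
    \<Rightarrow> ('a set \<times> 'a list) option \<Rightarrow> bool"
  for par x where
  pn_nil: "process_nbrs par x [] S Q (Some (S, Q))"
| pn_parent: "par x = Some y \<Longrightarrow> process_nbrs par x ys S Q r \<Longrightarrow> process_nbrs par x (y # ys) S Q r"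
| pn_child: "par x \<noteq> Some y \<Longrightarrow> par y = Some x \<Longrightarrow>
    process_nbrs par x ys (insert y S) (Q @ [y]) r \<Longrightarrow> process_nbrs par x (y # ys) S Q r"
| pn_scan_fail: "par x \<noteq> Some y \<Longrightarrow> par y \<noteq> Some x \<Longrightarrow> scan par S y S' False \<Longrightarrow>
    process_nbrs par x ys S' Q r \<Longrightarrow> process_nbrs par x (y # ys) S Q r"
| pn_success: "par x \<noteq> Some y \<Longrightarrow> par y \<noteq> Some x \<Longrightarrow> scan par S y S' True \<Longrightarrow>
    process_nbrs par x (y # ys) S Q None"

text \<open>Main loop with FIFO queue (list, popped from the front, pushed at the back).
  Result None = success reported; Some S = failure reported with final set S.\<close>
inductive search_loop :: "('a \<Rightarrow> 'a option) \<Rightarrow> ('a \<Rightarrow> 'a list) \<Rightarrow> 'a set \<Rightarrow> 'a list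
    \<Rightarrow> 'a set option \<Rightarrow> bool"
  for par nbrs where
  loop_empty: "search_loop par nbrs S [] (Some S)"
| loop_cont: "process_nbrs par x (nbrs x) S Q (Some (S', Q')) \<Longrightarrow> search_loop par nbrs S' Q' r \<Longrightarrow>
    search_loop par nbrs S (x # Q) r"
| loop_success: "process_nbrs par x (nbrs x) S Q None \<Longrightarrow> search_loop par nbrs S (x # Q) None"

definition replacement_search :: "('a \<Rightarrow> 'a option) \<Rightarrow> ('a \<Rightarrow> 'a list) \<Rightarrow> 'a \<Rightarrow> 'a set option \<Rightarrow> bool" where
  "replacement_search par nbrs u r \<longleftrightarrow> search_loop par nbrs {u} [u] r"

end

theory Submission
  imports Defs
begin

lemma pr_iff[simp]: "(a,b) \<in> parent_rel par \<longleftrightarrow> par a = Some b"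
  by (simp add: parent_rel_def)

lemma scan_mono: "scan par S w S' b \<Longrightarrow> S \<subseteq> S'"
  by (induction rule: scan.induct) auto

lemma scan_sub: "scan par S w S' b \<Longrightarrow> S' \<subseteq> S \<union> {v. (w,v) \<in> (parent_rel par)\<^sup>*}"
proof (induction rule: scan.induct)
  case (scan_up w S p S' b)
  have "(w,p) \<in> parent_rel par" using scan_up.hyps(2) by simp
  then have "{v. (p,v) \<in> (parent_rel par)\<^sup>*} \<subseteq> {v. (w,v) \<in> (parent_rel par)\<^sup>*}"
    by (auto intro: converse_rtrancl_into_rtrancl)
  then show ?case using scan_up.IH by auto
qed auto

lemma scan_true:
  assumes "scan par S w S' b" "acyclic (parent_rel par)"
    "\<forall>v. (w,v) \<in> (parent_rel par)\<^sup>* \<longrightarrow> v \<notin> S"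
  shows b
  using assms
proof (induction rule: scan.induct)
  case (scan_up w S p S' b)
  have "\<forall>v. (p,v) \<in> (parent_rel par)\<^sup>* \<longrightarrow> v \<notin> insert w S"
  proof (intro allI impI)
    fix v assume pv: "(p,v) \<in> (parent_rel par)\<^sup>*"
    have wp: "(w,p) \<in> parent_rel par" using scan_up.hyps by simp
    then have "(w,v) \<in> (parent_rel par)\<^sup>*" using pv by (rule converse_rtrancl_into_rtrancl)
    then have "v \<notin> S" using scan_up.prems by blast
    moreover have "v \<noteq> w"
    proof
      assume "v = w"
      then have "(w,w) \<in> (parent_rel par)\<^sup>+" using wp pv by (meson rtrancl_into_trancl2)
      then show False using scan_up.prems(1) by (simp add: acyclic_def)
    qed
    ultimately show "v \<notin> insert w S" by simp
  qed
  then show ?case using scan_up by blast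
qed auto

lemma func_path:
  assumes "(w,v) \<in> (parent_rel par)\<^sup>*" "(w,u) \<in> (parent_rel par)\<^sup>*" "par u = None"
  shows "(v,u) \<in> (parent_rel par)\<^sup>*"
  using assms(1)
proof (induction rule: rtrancl_induct)
  case base
  then show ?case using assms(2) .
next
  case (step y z)
  then have "y \<noteq> u" using assms(3) by auto
  with step.IH obtain z' where "(y,z') \<in> parent_rel par" "(z',u) \<in> (parent_rel par)\<^sup>*"
    by (auto elim: converse_rtranclE)
  then show ?case using step.hyps(2) by auto
qed

lemma tree_anc:
  assumes "w \<in> tree_of par u" "par u = None" "(w,v) \<in> (parent_rel par)\<^sup>*"
  shows "v \<in> tree_of par u"
  using func_path[OF assms(3) _ assms(2)] assms(1) unfolding tree_of_def by blast

lemma scan_fail_in: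
  assumes "scan par S w S' False" "acyclic (parent_rel par)" "S \<subseteq> tree_of par u" "par u = None"
  shows "w \<in> tree_of par u"
proof (rule ccontr)
  assume n: "w \<notin> tree_of par u"
  have "\<forall>v. (w,v) \<in> (parent_rel par)\<^sup>* \<longrightarrow> v \<notin> S"
  proof (intro allI impI)
    fix v assume "(w,v) \<in> (parent_rel par)\<^sup>*"
    moreover have "v \<notin> tree_of par u"
    proof
      assume "v \<in> tree_of par u"
      then have "(w,u) \<in> (parent_rel par)\<^sup>*" using \<open>(w,v) \<in> _\<close> unfolding tree_of_def by auto
      then show False using n unfolding tree_of_def by auto
    qed
    then show "v \<notin> S" using assms(3) by auto
  qed
  then show False using scan_true[OF assms(1,2)] by simp
qed

lemma proc_sub:
  assumes "process_nbrs par x ys S Q r"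
    "acyclic (parent_rel par)" "par u = None"
  shows "r = Some (S1,Q1) \<Longrightarrow> x \<in> tree_of par u \<Longrightarrow> S \<subseteq> tree_of par u \<Longrightarrow> set Q \<subseteq> tree_of par u
     \<Longrightarrow> S1 \<subseteq> tree_of par u \<and> set Q1 \<subseteq> tree_of par u"
  using assms(1)
proof (induction rule: process_nbrs.induct)
  case (pn_child y ys S Q r)
  then have "y \<in> tree_of par u" unfolding tree_of_def
    by (auto intro: converse_rtrancl_into_rtrancl)
  then show ?case using pn_child by auto
next
  case (pn_scan_fail y S S' ys Q r)
  have yT: "y \<in> tree_of par u" using scan_fail_in[OF pn_scan_fail.hyps(3) assms(2) pn_scan_fail.prems(3) assms(3)] .
  have "S' \<subseteq> tree_of par u" using scan_sub[OF pn_scan_fail.hyps(3)] pn_scan_fail.prems(3)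
      tree_anc[OF yT assms(3)] by blast
  then show ?case using pn_scan_fail by auto
qed auto

lemma loop_sub:
  assumes "search_loop par nbrs S Q r"
    "acyclic (parent_rel par)" "par u = None"
  shows "r = Some S' \<Longrightarrow> S \<subseteq> tree_of par u \<Longrightarrow> set Q \<subseteq> tree_of par u \<Longrightarrow> S' \<subseteq> tree_of par u"
  using assms(1)
proof (induction rule: search_loop.induct)
  case (loop_cont x S Q S1 Q1 r)
  have "S1 \<subseteq> tree_of par u \<and> set Q1 \<subseteq> tree_of par u"
    using proc_sub[OF loop_cont.hyps(1) assms(2,3)] loop_cont.prems by auto
  then show ?case using loop_cont by auto
qed auto

lemma proc_sup:
  assumes "process_nbrs par x ys S Q r"
  shows "r = Some (S1,Q1) \<Longrightarrow> (\<forall>c. par c = Some x \<longrightarrow> par x \<noteq> Some c) \<Longrightarrow>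
    S \<subseteq> S1 \<and> set Q \<subseteq> set Q1 \<and> set Q1 \<subseteq> set Q \<union> {c. par c = Some x} \<and>
    (\<forall>c. par c = Some x \<and> c \<in> set ys \<longrightarrow> c \<in> S1 \<and> c \<in> set Q1)"
  using assms
proof (induction rule: process_nbrs.induct)
  case (pn_scan_fail y S S' ys Q r)
  then show ?case using scan_mono[OF pn_scan_fail.hyps(3)] by auto
next
  case (pn_parent y ys S Q r)
  then show ?case by auto
qed auto

lemma loop_sup:
  assumes "search_loop par nbrs S Q r"
    and E_sym: "sym E"
    and E_sub: "E \<subseteq> V \<times> V"
    and nbrs_set: "\<And>x. x \<in> V \<Longrightarrow> set (nbrs x) = {y. (x, y) \<in> E}"
    and par_edges: "\<And>x p. par x = Some p \<Longrightarrow> x \<in> V \<and> (x, p) \<in> E"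
    and forest: "acyclic (parent_rel par)"
  shows "r = Some S' \<Longrightarrow> set Q \<subseteq> V \<Longrightarrow>
    S \<subseteq> S' \<and> (\<forall>x\<in>set Q. \<forall>c. (c,x) \<in> (parent_rel par)\<^sup>+ \<longrightarrow> c \<in> S')"
  using assms(1)
proof (induction rule: search_loop.induct)
  case (loop_empty S)
  then show ?case by simp
next
  case (loop_success x S Q)
  then show ?case by simp
next
  case (loop_cont x S Q S1 Q1 r)
  have xV: "x \<in> V" using loop_cont.prems by simp
  have nc: "\<forall>c. par c = Some x \<longrightarrow> par x \<noteq> Some c"
  proof (intro allI impI notI)
    fix c assume "par c = Some x" "par x = Some c"
    then have "(c,c) \<in> (parent_rel par)\<^sup>+" by (meson pr_iff trancl.simps)
    then show False using forest by (simp add: acyclic_def)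
  qed
  have P: "S \<subseteq> S1 \<and> set Q \<subseteq> set Q1 \<and> set Q1 \<subseteq> set Q \<union> {c. par c = Some x} \<and>
    (\<forall>c. par c = Some x \<and> c \<in> set (nbrs x) \<longrightarrow> c \<in> S1 \<and> c \<in> set Q1)"
    using proc_sup[OF loop_cont.hyps(1) refl nc] .
  have chn: "c \<in> set (nbrs x)" if "par c = Some x" for c
  proof -
    have "(c,x) \<in> E" using par_edges[OF that] by simp
    then have "(x,c) \<in> E" using E_sym by (meson symD)
    then show ?thesis using nbrs_set[OF xV] by simp
  qed
  have "set Q1 \<subseteq> V" using P loop_cont.prems(2) par_edges by auto
  then have IH: "S1 \<subseteq> S' \<and> (\<forall>x\<in>set Q1. \<forall>c. (c,x) \<in> (parent_rel par)\<^sup>+ \<longrightarrow> c \<in> S')"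
    using loop_cont.IH loop_cont.prems(1) by blast
  have X: "c \<in> S'" if "(c,x) \<in> (parent_rel par)\<^sup>+" for c
    using that
  proof (cases rule: tranclE)
    case base
    then show ?thesis using P IH chn by auto
  next
    case (step c')
    then have "c' \<in> set Q1" using P chn by auto
    then show ?thesis using IH step by blast
  qed
  show ?case using P IH X by auto
qed

theorem lemma7:
  fixes V :: "'a set" and E :: "('a \<times> 'a) set"
    and nbrs :: "'a \<Rightarrow> 'a list" and par :: "'a \<Rightarrow> 'a option" and u :: 'a and S :: "'a set"
  assumes finV: "finite V"
    and E_sub: "E \<subseteq> V \<times> V"
    and E_sym: "sym E"
    and E_irrefl: "irrefl E"
    and nbrs_set: "\<And>x. x \<in> V \<Longrightarrow> set (nbrs x) = {y. (x, y) \<in> E}"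
    and nbrs_dist: "\<And>x. x \<in> V \<Longrightarrow> distinct (nbrs x)"
    and par_edges: "\<And>x p. par x = Some p \<Longrightarrow> x \<in> V \<and> (x, p) \<in> E"
    and forest: "acyclic (parent_rel par)"
    and u_V: "u \<in> V"
    and u_root: "par u = None"
    and fail: "replacement_search par nbrs u (Some S)"
  shows "S = tree_of par u"
proof
  have L: "search_loop par nbrs {u} [u] (Some S)" using fail by (simp add: replacement_search_def)
  have "u \<in> tree_of par u" by (simp add: tree_of_def)
  then show "S \<subseteq> tree_of par u"
    using loop_sub[OF L forest u_root refl] by simp
  have A: "{u} \<subseteq> S \<and> (\<forall>x\<in>set [u]. \<forall>c. (c,x) \<in> (parent_rel par)\<^sup>+ \<longrightarrow> c \<in> S)"
    using loop_sup[OF L E_sym E_sub nbrs_set par_edges forest refl] u_V by simp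
  show "tree_of par u \<subseteq> S"
  proof
    fix v assume "v \<in> tree_of par u"
    then have "(v,u) \<in> (parent_rel par)\<^sup>*" by (simp add: tree_of_def)
    then have "v = u \<or> (v,u) \<in> (parent_rel par)\<^sup>+" by (meson rtranclD)
    then show "v \<in> S" using A by auto
  qed
qed

end
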